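(* Let $S$ be an inverse semigroup that is a mirror semigroup, with semilattice of idempotents $\Sigma$. If $(S,\leqslant)$ is a continuous poset (resp. a dcpo, a domain, an algebraic poset), then $(\Sigma,\leqslant)$ is a continuous poset (resp. a dcpo, a domain, an algebraic poset).
   Context: An inverse semigroup is a semigroup $S$ in which every $s$ has a unique $s^*$ with $ss^*s=s$ and $s^*ss^*=s^*$. $\Sigma=\Sigma(S)$ is the set of idempotents. The intrinsic order is $s\leqslant t$ iff $s=t\epsilon$ for some idempotent $\epsilon$. A subset is directed if nonempty and any two elements have an upper bound in it. $S$ is a mirror semigroup if every directed subset of $\Sigma$ having a supremum in $(\Sigma,\leqslant)$ also has a supremum in $(S,\leqslant)$. In a poset, $x$ is way-below $y$ ($x\ll y$) if for every directed subset $D$ that has a supremum with $y\leqslant \sup D$, there is $d\in D$ with $x\leqslant d$. A poset is continuous if for every $s$ the set $\{t : t\ll s\}$ is directed with supremum $s$. A dcpo is a poset in which every directed subset has a supremum; a domain is a continuous dcpo. An element $k$ is compact if $k\ll k$; a poset is algebraic if every element is the supremum of the directed set of compact elements below it. *)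

theory Defs
  imports Main
begin

text \<open>Inverse semigroups: the ambient type 'a carries an associative multiplication
  (class semigroup_mult); the whole type is the semigroup S.\<close>

definition inverse_semigroup :: "('a::semigroup_mult) itself \<Rightarrow> bool" where
  "inverse_semigroup _ \<longleftrightarrow> (\<forall>s::'a. \<exists>!t. s * t * s = s \<and> t * s * t = t)"

definition idempotents :: "('a::semigroup_mult) set" where
  "idempotents = {e. e * e = e}"

definition nat_le :: "'a::semigroup_mult \<Rightarrow> 'a \<Rightarrow> bool" where
  "nat_le s t \<longleftrightarrow> (\<exists>e\<in>idempotents. s = t * e)"

definition directed_in :: "'a set \<Rightarrow> ('a \<Rightarrow> 'a \<Rightarrow> bool) \<Rightarrow> 'a set \<Rightarrow> bool" where
  "directed_in X le D \<longleftrightarrow> D \<subseteq> X \<and> D \<noteq> {} \<and>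
     (\<forall>a\<in>D. \<forall>b\<in>D. \<exists>c\<in>D. le a c \<and> le b c)"

definition is_sup_in :: "'a set \<Rightarrow> ('a \<Rightarrow> 'a \<Rightarrow> bool) \<Rightarrow> 'a set \<Rightarrow> 'a \<Rightarrow> bool" where
  "is_sup_in X le D s \<longleftrightarrow> s \<in> X \<and> (\<forall>d\<in>D. le d s) \<and>
     (\<forall>u\<in>X. (\<forall>d\<in>D. le d u) \<longrightarrow> le s u)"

definition way_below_in :: "'a set \<Rightarrow> ('a \<Rightarrow> 'a \<Rightarrow> bool) \<Rightarrow> 'a \<Rightarrow> 'a \<Rightarrow> bool" where
  "way_below_in X le x y \<longleftrightarrow>
     (\<forall>D. directed_in X le D \<longrightarrow> (\<forall>s. is_sup_in X le D s \<longrightarrow> le y s \<longrightarrow> (\<exists>d\<in>D. le x d)))"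

definition continuous_poset :: "'a set \<Rightarrow> ('a \<Rightarrow> 'a \<Rightarrow> bool) \<Rightarrow> bool" where
  "continuous_poset X le \<longleftrightarrow> (\<forall>s\<in>X.
     directed_in X le {t\<in>X. way_below_in X le t s} \<and>
     is_sup_in X le {t\<in>X. way_below_in X le t s} s)"

definition dcpo_in :: "'a set \<Rightarrow> ('a \<Rightarrow> 'a \<Rightarrow> bool) \<Rightarrow> bool" where
  "dcpo_in X le \<longleftrightarrow> (\<forall>D. directed_in X le D \<longrightarrow> (\<exists>s. is_sup_in X le D s))"

definition domain_in :: "'a set \<Rightarrow> ('a \<Rightarrow> 'a \<Rightarrow> bool) \<Rightarrow> bool" where
  "domain_in X le \<longleftrightarrow> continuous_poset X le \<and> dcpo_in X le"

definition compact_in :: "'a set \<Rightarrow> ('a \<Rightarrow> 'a \<Rightarrow> bool) \<Rightarrow> 'a \<Rightarrow> bool" where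
  "compact_in X le k \<longleftrightarrow> k \<in> X \<and> way_below_in X le k k"

definition algebraic_poset :: "'a set \<Rightarrow> ('a \<Rightarrow> 'a \<Rightarrow> bool) \<Rightarrow> bool" where
  "algebraic_poset X le \<longleftrightarrow> (\<forall>s\<in>X.
     directed_in X le {k. compact_in X le k \<and> le k s} \<and>
     is_sup_in X le {k. compact_in X le k \<and> le k s} s)"

definition mirror_semigroup :: "('a::semigroup_mult) itself \<Rightarrow> bool" where
  "mirror_semigroup _ \<longleftrightarrow> (\<forall>D::'a set.
     directed_in idempotents nat_le D \<longrightarrow> (\<exists>s. is_sup_in idempotents nat_le D s) \<longrightarrow>
     (\<exists>s. is_sup_in UNIV nat_le D s))"

end

theory Submission
  imports Defs
begin

definition isinv :: "'a::semigroup_mult \<Rightarrow> 'a" where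
  "isinv s = (THE t. s * t * s = s \<and> t * s * t = t)"

lemma inv_props:
  assumes I: "inverse_semigroup TYPE('a::semigroup_mult)"
  shows "(s::'a) * isinv s * s = s \<and> isinv s * s * isinv s = isinv s"
proof -
  from I have "\<exists>!t. s * t * s = s \<and> t * s * t = t" unfolding inverse_semigroup_def by blast
  then show ?thesis unfolding isinv_def by (rule theI')
qed

lemma inv_unique:
  assumes I: "inverse_semigroup TYPE('a::semigroup_mult)"
    and "(s::'a) * t * s = s" "t * s * t = t"
  shows "t = isinv s"
proof -
  from I have u: "\<exists>!t. s * t * s = s \<and> t * s * t = t" unfolding inverse_semigroup_def by blast
  show ?thesis using u assms(2,3) inv_props[OF I, of s] by blast
qed

lemma idem_inv:
  assumes I: "inverse_semigroup TYPE('a::semigroup_mult)" and "(e::'a) * e = e"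
  shows "isinv e = e"
  using inv_unique[OF I, of e e] assms(2) by simp

lemma idem_comm:
  assumes I: "inverse_semigroup TYPE('a::semigroup_mult)"
    and e: "(e::'a) * e = e" and f: "f * f = f"
  shows "e * f = f * e"
proof -
  have gen: "a * b * (a * b) = a * b" if a: "(a::'a) * a = a" and b: "b * b = b" for a b
  proof -
    define x where "x = isinv (a * b)"
    have x1: "a * b * x * (a * b) = a * b" and x2: "x * (a * b) * x = x"
      using inv_props[OF I, of "a*b"] unfolding x_def by auto
    have "a * b * (b * x * a) * (a * b) = a * (b * b) * x * (a * a) * b"
      by (simp add: mult.assoc)
    also have "\<dots> = a * b" using a b x1 by (simp add: mult.assoc)
    finally have y1: "a * b * (b * x * a) * (a * b) = a * b" .
    have "b * x * a * (a * b) * (b * x * a) = b * (x * (a * a) * (b * b) * x) * a"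
      by (simp add: mult.assoc)
    also have "\<dots> = b * (x * (a * b) * x) * a" using a b by (simp add: mult.assoc)
    also have "\<dots> = b * x * a" using x2 by (simp add: mult.assoc)
    finally have y2: "b * x * a * (a * b) * (b * x * a) = b * x * a" .
    have bxa: "b * x * a = x" using inv_unique[OF I, OF y1 y2] unfolding x_def by simp
    have xx: "x * x = x"
    proof -
      have "x * x = b * (x * (a * b) * x) * a" using bxa
        by (metis mult.assoc)
      also have "\<dots> = x" using x2 bxa by (simp add: mult.assoc)
      finally show ?thesis .
    qed
    have "a * b = isinv x"
      using inv_unique[OF I, of x "a*b"] x1 x2 by simp
    also have "\<dots> = x" using idem_inv[OF I xx] .
    finally show ?thesis using xx by simp
  qed
  have ef: "e * f * (e * f) = e * f" using gen e f .
  have fe: "f * e * (f * e) = f * e" using gen f e .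
  have z1: "f * e * (e * f) * (f * e) = f * e"
  proof -
    have "f * e * (e * f) * (f * e) = f * (e * e) * (f * f) * e" by (simp add: mult.assoc)
    also have "\<dots> = f * e * (f * e)" using e f by (simp add: mult.assoc)
    finally show ?thesis using fe by simp
  qed
  have z2: "e * f * (f * e) * (e * f) = e * f"
  proof -
    have "e * f * (f * e) * (e * f) = e * (f * f) * (e * e) * f" by (simp add: mult.assoc)
    also have "\<dots> = e * f * (e * f)" using e f by (simp add: mult.assoc)
    finally show ?thesis using ef by simp
  qed
  have "e * f = isinv (f * e)" using inv_unique[OF I z1 z2] .
  also have "\<dots> = f * e" using idem_inv[OF I fe] .
  finally show ?thesis .
qed

lemma idem_mult:
  assumes I: "inverse_semigroup TYPE('a::semigroup_mult)"
    and "(e::'a) \<in> idempotents" "f \<in> idempotents"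
  shows "e * f \<in> idempotents"
proof -
  have e: "e * e = e" and f: "f * f = f" using assms(2,3) by (auto simp: idempotents_def)
  have "e * f * (e * f) = e * (f * e) * f" by (simp add: mult.assoc)
  also have "\<dots> = e * (e * f) * f" using idem_comm[OF I f e] by simp
  also have "\<dots> = (e * e) * (f * f)" by (simp add: mult.assoc)
  finally show ?thesis using e f by (simp add: idempotents_def)
qed

lemma invs_idem:
  assumes I: "inverse_semigroup TYPE('a::semigroup_mult)"
  shows "isinv (s::'a) * s \<in> idempotents" "s * isinv s \<in> idempotents"
proof -
  have p1: "s * isinv s * s = s" and p2: "isinv s * s * isinv s = isinv s" using inv_props[OF I] by auto
  have "isinv s * s * (isinv s * s) = (isinv s * s * isinv s) * s" by (simp add: mult.assoc)
  then show "isinv s * s \<in> idempotents" using p2 by (simp add: idempotents_def)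
  have "s * isinv s * (s * isinv s) = (s * isinv s * s) * isinv s" by (simp add: mult.assoc)
  then show "s * isinv s \<in> idempotents" using p1 by (simp add: idempotents_def)
qed

lemma le_refl:
  assumes I: "inverse_semigroup TYPE('a::semigroup_mult)"
  shows "nat_le (s::'a) s"
  unfolding nat_le_def
  using invs_idem[OF I, of s] inv_props[OF I, of s] by (metis mult.assoc)

lemma le_trans:
  assumes I: "inverse_semigroup TYPE('a::semigroup_mult)"
    and "nat_le (s::'a) t" "nat_le t u"
  shows "nat_le s u"
proof -
  obtain e where e: "e \<in> idempotents" "s = t * e" using assms(2) by (auto simp: nat_le_def)
  obtain f where f: "f \<in> idempotents" "t = u * f" using assms(3) by (auto simp: nat_le_def)
  have "s = u * (f * e)" using e f by (simp add: mult.assoc)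
  then show ?thesis using idem_mult[OF I f(1) e(1)] by (auto simp: nat_le_def)
qed

lemma le_antisym:
  assumes I: "inverse_semigroup TYPE('a::semigroup_mult)"
    and "nat_le (s::'a) t" "nat_le t s"
  shows "s = t"
proof -
  obtain e where e: "e \<in> idempotents" "s = t * e" using assms(2) by (auto simp: nat_le_def)
  obtain f where f: "f \<in> idempotents" "t = s * f" using assms(3) by (auto simp: nat_le_def)
  have ee: "e * e = e" and ff: "f * f = f" using e f by (auto simp: idempotents_def)
  have sfe: "s = s * f * e" using e f by simp
  have "s * f = s * f * e * f" using sfe by simp
  also have "\<dots> = s * f * (f * e)" using idem_comm[OF I ee ff] by (simp add: mult.assoc)
  also have "\<dots> = s * (f * f) * e" by (simp add: mult.assoc)
  also have "\<dots> = s" using ff sfe by simp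
  finally show ?thesis using f by simp
qed

lemma down_closed:
  assumes I: "inverse_semigroup TYPE('a::semigroup_mult)"
    and "nat_le (s::'a) e" "e \<in> idempotents"
  shows "s \<in> idempotents"
  using assms idem_mult[OF I] by (auto simp: nat_le_def)

lemma conj_idem:
  assumes I: "inverse_semigroup TYPE('a::semigroup_mult)"
    and e: "(e::'a) \<in> idempotents"
  shows "e * x = x * (isinv x * e * x)" "isinv x * e * x \<in> idempotents"
proof -
  have ee: "e * e = e" using e by (simp add: idempotents_def)
  have p1: "x * isinv x * x = x" and p2: "isinv x * x * isinv x = isinv x" using inv_props[OF I] by auto
  have xx: "x * isinv x * (x * isinv x) = x * isinv x" using invs_idem(2)[OF I, of x]
    by (simp add: idempotents_def)
  have c: "x * isinv x * e = e * (x * isinv x)" using idem_comm[OF I xx ee] .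
  have "x * (isinv x * e * x) = (x * isinv x * e) * x" by (simp add: mult.assoc)
  also have "\<dots> = e * (x * isinv x * x)" using c by (simp add: mult.assoc)
  finally show "e * x = x * (isinv x * e * x)" using p1 by simp
  have "isinv x * e * x * (isinv x * e * x) = isinv x * (e * (x * isinv x)) * e * x"
    by (simp add: mult.assoc)
  also have "\<dots> = isinv x * (x * isinv x * e) * e * x" using c by simp
  also have "\<dots> = (isinv x * x * isinv x) * (e * e) * x" by (simp add: mult.assoc)
  also have "\<dots> = isinv x * e * x" using p2 ee by simp
  finally show "isinv x * e * x \<in> idempotents" by (simp add: idempotents_def)
qed

lemma le_mult:
  assumes I: "inverse_semigroup TYPE('a::semigroup_mult)"
    and "nat_le (a::'a) b" "nat_le c d"
  shows "nat_le (a * c) (b * d)"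
proof -
  obtain e where e: "e \<in> idempotents" "a = b * e" using assms(2) by (auto simp: nat_le_def)
  obtain f where f: "f \<in> idempotents" "c = d * f" using assms(3) by (auto simp: nat_le_def)
  have "a * c = b * (e * d) * f" using e f by (simp add: mult.assoc)
  also have "\<dots> = b * (d * (isinv d * e * d)) * f" using conj_idem(1)[OF I e(1), of d]
    by simp
  also have "\<dots> = b * d * ((isinv d * e * d) * f)" by (simp add: mult.assoc)
  finally show ?thesis using idem_mult[OF I conj_idem(2)[OF I e(1)] f(1)]
    by (auto simp: nat_le_def)
qed

lemma sup_idem:
  assumes I: "inverse_semigroup TYPE('a::semigroup_mult)"
    and D: "D \<subseteq> (idempotents::'a set)" "D \<noteq> {}" and s: "is_sup_in UNIV nat_le D s"
  shows "s \<in> idempotents"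
proof -
  have "\<forall>d\<in>D. nat_le d (s * s)"
  proof
    fix d assume "d \<in> D"
    then have "nat_le d s" "d * d = d" using s D by (auto simp: is_sup_in_def idempotents_def)
    then show "nat_le d (s * s)" using le_mult[OF I, of d s d s] by simp
  qed
  then have "nat_le s (s * s)" using s by (auto simp: is_sup_in_def)
  then obtain g where g: "g \<in> idempotents" "s = s * s * g" by (auto simp: nat_le_def)
  have gg: "g * g = g" using g by (simp add: idempotents_def)
  have "s * g = s * s * (g * g)" using g by (metis mult.assoc)
  then have sg: "s * g = s" using gg g by simp
  have "s = s * (s * g)" using g by (simp add: mult.assoc)
  then show ?thesis using sg by (simp add: idempotents_def)
qed

lemma sup_to_idem:
  assumes I: "inverse_semigroup TYPE('a::semigroup_mult)"
    and D: "D \<subseteq> (idempotents::'a set)" "D \<noteq> {}" and s: "is_sup_in UNIV nat_le D s"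
  shows "is_sup_in idempotents nat_le D s"
  using sup_idem[OF I D s] s by (auto simp: is_sup_in_def)

lemma sup_from_idem:
  assumes I: "inverse_semigroup TYPE('a::semigroup_mult)" and M: "mirror_semigroup TYPE('a)"
    and D: "directed_in (idempotents::'a set) nat_le D" and e: "is_sup_in idempotents nat_le D e"
  shows "is_sup_in UNIV nat_le D e"
proof -
  obtain s where s: "is_sup_in UNIV nat_le D s"
    using M D e unfolding mirror_semigroup_def by blast
  have D': "D \<subseteq> idempotents" "D \<noteq> {}" using D by (auto simp: directed_in_def)
  have s2: "is_sup_in idempotents nat_le D s" using sup_to_idem[OF I D' s] .
  have "s = e" using le_antisym[OF I] s2 e by (auto simp: is_sup_in_def)
  then show ?thesis using s by simp
qed

lemma wb_transfer:
  assumes I: "inverse_semigroup TYPE('a::semigroup_mult)" and M: "mirror_semigroup TYPE('a)"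
    and w: "way_below_in UNIV nat_le (x::'a) y"
  shows "way_below_in idempotents nat_le x y"
  unfolding way_below_in_def
proof (intro allI impI)
  fix D s assume D: "directed_in idempotents nat_le D" and s: "is_sup_in idempotents nat_le D s"
    and ys: "nat_le y s"
  have "is_sup_in UNIV nat_le D s" using sup_from_idem[OF I M D s] .
  moreover have "directed_in UNIV nat_le D" using D by (auto simp: directed_in_def)
  ultimately show "\<exists>d\<in>D. nat_le x d" using w ys unfolding way_below_in_def by blast
qed

lemma wb_le:
  assumes I: "inverse_semigroup TYPE('a::semigroup_mult)"
    and y: "(y::'a) \<in> X" and w: "way_below_in X nat_le x y"
  shows "nat_le x y"
proof -
  have "directed_in X nat_le {y}" using y le_refl[OF I] by (auto simp: directed_in_def)
  moreover have "is_sup_in X nat_le {y} y" using y le_refl[OF I] by (auto simp: is_sup_in_def)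
  ultimately show ?thesis using w le_refl[OF I, of y] unfolding way_below_in_def by blast
qed

lemma wb_compact:
  assumes I: "inverse_semigroup TYPE('a::semigroup_mult)"
    and w: "way_below_in X nat_le (x::'a) x" and xy: "nat_le x y"
  shows "way_below_in X nat_le x y"
  using w xy le_trans[OF I] unfolding way_below_in_def by blast

lemma key:
  assumes I: "inverse_semigroup TYPE('a::semigroup_mult)"
    and sI: "(s::'a) \<in> idempotents"
    and PQ: "P \<subseteq> Q" "Q \<subseteq> idempotents"
    and Pd: "directed_in UNIV nat_le P" and Ps: "is_sup_in UNIV nat_le P s"
    and Qp: "\<And>q. q \<in> Q \<Longrightarrow> nat_le q s \<and> way_below_in idempotents nat_le q s"
  shows "directed_in idempotents nat_le Q \<and> is_sup_in idempotents nat_le Q s"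
proof -
  have Pne: "P \<noteq> {}" using Pd by (auto simp: directed_in_def)
  have Pd2: "directed_in idempotents nat_le P" using Pd PQ by (auto simp: directed_in_def)
  have Ps2: "is_sup_in idempotents nat_le P s" using sup_to_idem[OF I _ Pne Ps] PQ by blast
  have ub: "\<exists>p\<in>P. nat_le q p" if "q \<in> Q" for q
    using Qp[OF that] Pd2 Ps2 le_refl[OF I, of s] unfolding way_below_in_def by blast
  have "directed_in idempotents nat_le Q"
    unfolding directed_in_def
  proof (intro conjI ballI)
    show "Q \<subseteq> idempotents" using PQ by blast
    show "Q \<noteq> {}" using Pne PQ by blast
    fix a b assume a: "a \<in> Q" and b: "b \<in> Q"
    obtain p1 where p1: "p1 \<in> P" "nat_le a p1" using ub[OF a] by blast
    obtain p2 where p2: "p2 \<in> P" "nat_le b p2" using ub[OF b] by blast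
    obtain p3 where p3: "p3 \<in> P" "nat_le p1 p3" "nat_le p2 p3"
      using Pd p1 p2 unfolding directed_in_def by blast
    show "\<exists>c\<in>Q. nat_le a c \<and> nat_le b c"
      using p3 p1 p2 PQ le_trans[OF I] by blast
  qed
  moreover have "is_sup_in idempotents nat_le Q s"
    unfolding is_sup_in_def
  proof (intro conjI ballI impI)
    show "s \<in> idempotents" using sI .
    fix d assume "d \<in> Q" then show "nat_le d s" using Qp by blast
  next
    fix u assume "u \<in> idempotents" "\<forall>d\<in>Q. nat_le d u"
    then show "nat_le s u" using Ps2 PQ unfolding is_sup_in_def by blast
  qed
  ultimately show ?thesis by blast
qed

theorem lemma5p2:
  assumes "inverse_semigroup TYPE('a::semigroup_mult)"
    and "mirror_semigroup TYPE('a)"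
  shows "(continuous_poset (UNIV::'a set) nat_le \<longrightarrow> continuous_poset (idempotents::'a set) nat_le)
       \<and> (dcpo_in (UNIV::'a set) nat_le \<longrightarrow> dcpo_in (idempotents::'a set) nat_le)
       \<and> (domain_in (UNIV::'a set) nat_le \<longrightarrow> domain_in (idempotents::'a set) nat_le)
       \<and> (algebraic_poset (UNIV::'a set) nat_le \<longrightarrow> algebraic_poset (idempotents::'a set) nat_le)"
proof -
  note I = assms(1) and M = assms(2)
  have C: "continuous_poset (idempotents::'a set) nat_le" if c: "continuous_poset (UNIV::'a set) nat_le"
    unfolding continuous_poset_def
  proof (intro ballI)
    fix s :: 'a assume sI: "s \<in> idempotents"
    let ?P = "{t\<in>UNIV. way_below_in UNIV nat_le t s}"
    let ?Q = "{t\<in>idempotents. way_below_in idempotents nat_le t s}"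
    have P: "directed_in UNIV nat_le ?P" "is_sup_in UNIV nat_le ?P s"
      using c unfolding continuous_poset_def by blast+
    have PQ: "?P \<subseteq> ?Q"
    proof
      fix t assume "t \<in> ?P"
      then have w: "way_below_in UNIV nat_le t s" by simp
      have "nat_le t s" using wb_le[OF I _ w] by simp
      then have "t \<in> idempotents" using down_closed[OF I _ sI] by blast
      then show "t \<in> ?Q" using wb_transfer[OF I M w] by simp
    qed
    show "directed_in idempotents nat_le ?Q \<and> is_sup_in idempotents nat_le ?Q s"
      using key[OF I sI PQ _ P] wb_le[OF I sI] by blast
  qed
  have Dc: "dcpo_in (idempotents::'a set) nat_le" if c: "dcpo_in (UNIV::'a set) nat_le"
    unfolding dcpo_in_def
  proof (intro allI impI)
    fix D :: "'a set" assume D: "directed_in idempotents nat_le D"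
    then have "directed_in UNIV nat_le D" by (auto simp: directed_in_def)
    then obtain s where s: "is_sup_in UNIV nat_le D s" using c unfolding dcpo_in_def by blast
    have "D \<subseteq> idempotents" "D \<noteq> {}" using D by (auto simp: directed_in_def)
    then show "\<exists>s. is_sup_in idempotents nat_le D s" using sup_to_idem[OF I _ _ s] by blast
  qed
  have A: "algebraic_poset (idempotents::'a set) nat_le" if c: "algebraic_poset (UNIV::'a set) nat_le"
    unfolding algebraic_poset_def
  proof (intro ballI)
    fix s :: 'a assume sI: "s \<in> idempotents"
    let ?P = "{k. compact_in UNIV nat_le k \<and> nat_le k s}"
    let ?Q = "{k. compact_in idempotents nat_le k \<and> nat_le k s}"
    have P: "directed_in UNIV nat_le ?P" "is_sup_in UNIV nat_le ?P s"
      using c unfolding algebraic_poset_def by blast+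
    have PQ: "?P \<subseteq> ?Q"
    proof
      fix t assume "t \<in> ?P"
      then have w: "way_below_in UNIV nat_le t t" and ts: "nat_le t s" by (auto simp: compact_in_def)
      have "t \<in> idempotents" using down_closed[OF I ts sI] .
      then show "t \<in> ?Q" using wb_transfer[OF I M w] ts by (simp add: compact_in_def)
    qed
    have Q: "?Q \<subseteq> idempotents" by (auto simp: compact_in_def)
    have Qp: "nat_le q s \<and> way_below_in idempotents nat_le q s" if "q \<in> ?Q" for q
      using that wb_compact[OF I] by (auto simp: compact_in_def)
    show "directed_in idempotents nat_le ?Q \<and> is_sup_in idempotents nat_le ?Q s"
      using key[OF I sI PQ Q P Qp] by blast
  qed
  show ?thesis using C Dc A unfolding domain_in_def by blast
qed

end
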